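(* Let $\mathcal G=(\mathcal V,\mathcal E)$ be a finite digraph with vertices $v_1,\dots,v_N$ and finite digraph diameter $D$, and run the synchronous dynamics described in the context. For each $i$ let $\tau_i=\min\{k\ge 1: w_i[k]=\text{True}\}$ be the number of iterations after which vertex $v_i$ stops (the first step at which $y_i$ does not change). Then the algorithm converges in $D+1$ iterations, i.e. $\max_{1\le i\le N}\tau_i=D+1$ (equivalently $\min\{k\ge1: w_i[k]=\text{True for all } i\}=D+1$), and hence $D=\max_{1\le i\le N}\tau_i-1$.
   Context: For $v\in\mathcal V$, $\mathcal N^-_{v}=\{u:(u,v)\in\mathcal E\}$ is the set of in-neighbors of $v$. The finite digraph diameter $D$ is the maximum, over all ordered pairs $(u,v)$ of vertices such that a directed path from $u$ to $v$ exists, of the number of edges of a shortest directed path from $u$ to $v$ (with distance $0$ when $u=v$). The dynamics are run synchronously by all vertices at every time step $k=0,1,2,\dots$: initialize $x_i[0]=\{v_i\}$, $y_i[0]=1$, $z_i[0]=\emptyset$, $w_i[0]=\text{False}$, and for $k\ge 0$ set $x_i[k+1]=\bigcup_{v_j\in\mathcal N^-_{v_i}\cup\{v_i\}}x_j[k]$; $y_i[k+1]=\max\{\max_{v_j\in\mathcal N^-_{v_i}}|x_j[k]|,\ |x_i[k+1]|\}$ (the inner maximum is omitted if $\mathcal N^-_{v_i}=\emptyset$); $z_i[k+1]=\{v_j:\ y_i[k+1]=y_j[k]\ \text{and}\ v_j\in\bigcup_{v_l\in\mathcal N^-_{v_i}\cup\{v_i\}}x_l[k]\}$; $w_i[k+1]=\text{True}$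 if $y_i[k+1]=y_i[k]$ and False otherwise. *)

theory Defs
  imports Main
begin

definition in_nbrs :: "'a rel \<Rightarrow> 'a \<Rightarrow> 'a set" where
  "in_nbrs E v = {u. (u, v) \<in> E}"

definition dist :: "'a rel \<Rightarrow> 'a \<Rightarrow> 'a \<Rightarrow> nat" where
  "dist E u v = (LEAST n. (u, v) \<in> E ^^ n)"

definition diam :: "'a set \<Rightarrow> 'a rel \<Rightarrow> nat" where
  "diam V E = Max {dist E u v | u v. u \<in> V \<and> v \<in> V \<and> (u, v) \<in> E\<^sup>*}"

fun xs :: "'a rel \<Rightarrow> nat \<Rightarrow> 'a \<Rightarrow> 'a set" where
  "xs E 0 i = {i}"
| "xs E (Suc k) i = \<Union> (xs E k ` (in_nbrs E i \<union> {i}))"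

fun ys :: "'a rel \<Rightarrow> nat \<Rightarrow> 'a \<Rightarrow> nat" where
  "ys E 0 i = 1"
| "ys E (Suc k) i =
     (if in_nbrs E i = {} then card (xs E (Suc k) i)
      else max (Max ((\<lambda>j. card (xs E k j)) ` in_nbrs E i)) (card (xs E (Suc k) i)))"

fun zs :: "'a rel \<Rightarrow> nat \<Rightarrow> 'a \<Rightarrow> 'a set" where
  "zs E 0 i = {}"
| "zs E (Suc k) i = {j. ys E (Suc k) i = ys E k j \<and> j \<in> \<Union> (xs E k ` (in_nbrs E i \<union> {i}))}"

fun ws :: "'a rel \<Rightarrow> nat \<Rightarrow> 'a \<Rightarrow> bool" where
  "ws E 0 i = False"
| "ws E (Suc k) i = (ys E (Suc k) i = ys E k i)"

definition tau :: "'a rel \<Rightarrow> 'a \<Rightarrow> nat" where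
  "tau E i = (LEAST k. k \<ge> 1 \<and> ws E k i)"

end

theory Submission
  imports Defs
begin

lemma xs_char: "xs E k i = {u. \<exists>n\<le>k. (u, i) \<in> E ^^ n}"
proof (induction k arbitrary: i)
  case 0
  then show ?case by auto
next
  case (Suc k)
  show ?case
  proof
    show "xs E (Suc k) i \<subseteq> {u. \<exists>n\<le>Suc k. (u, i) \<in> E ^^ n}"
    proof
      fix u assume "u \<in> xs E (Suc k) i"
      then obtain j where j: "j \<in> in_nbrs E i \<union> {i}" "u \<in> xs E k j" by auto
      then obtain n where n: "n \<le> k" "(u, j) \<in> E ^^ n" using Suc by auto
      show "u \<in> {u. \<exists>n\<le>Suc k. (u, i) \<in> E ^^ n}"
      proof (cases "j = i")
        case True then show ?thesis using n by (auto intro!: exI[of _ n])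
      next
        case False
        then have "(j, i) \<in> E" using j by (auto simp: in_nbrs_def)
        then have "(u, i) \<in> E ^^ Suc n" using n by auto
        then show ?thesis using n by (auto intro!: exI[of _ "Suc n"])
      qed
    qed
  next
    show "{u. \<exists>n\<le>Suc k. (u, i) \<in> E ^^ n} \<subseteq> xs E (Suc k) i"
    proof
      fix u assume "u \<in> {u. \<exists>n\<le>Suc k. (u, i) \<in> E ^^ n}"
      then obtain n where n: "n \<le> Suc k" "(u, i) \<in> E ^^ n" by auto
      show "u \<in> xs E (Suc k) i"
      proof (cases n)
        case 0
        then have "u = i" using n by auto
        then have "u \<in> xs E k i" using Suc by (auto intro!: exI[of _ 0])
        then show ?thesis by auto
      next
        case (Suc m)
        then obtain j where "(u, j) \<in> E ^^ m" "(j, i) \<in> E" using n by auto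
        moreover have "m \<le> k" using Suc n by auto
        ultimately have "u \<in> xs E k j" "j \<in> in_nbrs E i" using Suc.IH
          by (auto simp: in_nbrs_def)
        then show ?thesis by auto
      qed
    qed
  qed
qed

lemma relpow_in_V: "E \<subseteq> V \<times> V \<Longrightarrow> (u, i) \<in> E ^^ n \<Longrightarrow> u \<in> insert i V"
proof (cases n)
  case (Suc m)
  assume "E \<subseteq> V \<times> V" "(u, i) \<in> E ^^ n"
  then obtain y where "(u, y) \<in> E" using Suc relpow_Suc_D2 by metis
  then show ?thesis using \<open>E \<subseteq> V \<times> V\<close> by auto
qed simp

lemma xs_sub: "E \<subseteq> V \<times> V \<Longrightarrow> xs E k i \<subseteq> insert i V"
  by (auto simp: xs_char dest: relpow_in_V)

lemma xs_fin: "finite V \<Longrightarrow> E \<subseteq> V \<times> V \<Longrightarrow> finite (xs E k i)"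
  using xs_sub[of E V k i] by (meson finite_insert finite_subset)

lemma xs_mono: "xs E k i \<subseteq> xs E (Suc k) i"
  unfolding xs_char by (auto intro: le_SucI)

lemma ys_card:
  assumes "finite V" "E \<subseteq> V \<times> V"
  shows "ys E k i = card (xs E k i)"
proof (cases k)
  case 0 then show ?thesis by simp
next
  case (Suc m)
  have fin: "finite (in_nbrs E i)"
    using assms by (auto simp: in_nbrs_def intro: finite_subset[of _ V])
  have "\<forall>j\<in>in_nbrs E i. card (xs E m j) \<le> card (xs E (Suc m) i)"
  proof
    fix j assume "j \<in> in_nbrs E i"
    then have "xs E m j \<subseteq> xs E (Suc m) i" by auto
    then show "card (xs E m j) \<le> card (xs E (Suc m) i)"
      using xs_fin[OF assms] card_mono by blast
  qed
  then show ?thesis using Suc fin by (auto simp: max_def)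
qed

lemma ws_iff:
  assumes "finite V" "E \<subseteq> V \<times> V"
  shows "ws E (Suc k) i \<longleftrightarrow> xs E (Suc k) i = xs E k i"
  using ys_card[OF assms] xs_mono[of E k i] xs_fin[OF assms]
  by (metis card_subset_eq ws.simps(2))

definition ecc :: "'a rel \<Rightarrow> 'a \<Rightarrow> nat" where
  "ecc E i = Max {dist E u i | u. (u, i) \<in> E\<^sup>*}"

lemma dist_path: "(u, i) \<in> E\<^sup>* \<Longrightarrow> (u, i) \<in> E ^^ (dist E u i)"
  unfolding dist_def by (metis LeastI rtrancl_power)

lemma dist_le: "(u, i) \<in> E ^^ n \<Longrightarrow> dist E u i \<le> n"
  unfolding dist_def by (rule Least_le)

lemma R_fin:
  assumes "finite V" "E \<subseteq> V \<times> V"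
  shows "finite {dist E u i | u. (u, i) \<in> E\<^sup>*}"
proof -
  have "{u. (u, i) \<in> E\<^sup>*} \<subseteq> insert i V"
    using relpow_in_V[OF assms(2)] by (auto simp: rtrancl_power)
  then have "finite {u. (u, i) \<in> E\<^sup>*}" using assms(1) by (meson finite_insert finite_subset)
  then have "finite ((\<lambda>u. dist E u i) ` {u. (u, i) \<in> E\<^sup>*})" by simp
  moreover have "{dist E u i | u. (u, i) \<in> E\<^sup>*} = (\<lambda>u. dist E u i) ` {u. (u, i) \<in> E\<^sup>*}"
    by auto
  ultimately show ?thesis by simp
qed

lemma dist_le_ecc:
  assumes "finite V" "E \<subseteq> V \<times> V" "(u, i) \<in> E\<^sup>*"
  shows "dist E u i \<le> ecc E i"
  unfolding ecc_def using R_fin[OF assms(1,2)] assms(3) by (auto intro: Max_ge)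

lemma ecc_attained:
  assumes "finite V" "E \<subseteq> V \<times> V"
  obtains u where "(u, i) \<in> E\<^sup>*" "dist E u i = ecc E i"
proof -
  have "{dist E u i | u. (u, i) \<in> E\<^sup>*} \<noteq> {}" by auto
  then have "ecc E i \<in> {dist E u i | u. (u, i) \<in> E\<^sup>*}"
    unfolding ecc_def using R_fin[OF assms] Max_in by blast
  then show ?thesis using that by auto
qed

lemma stable_iff:
  assumes "finite V" "E \<subseteq> V \<times> V"
  shows "xs E (Suc k) i = xs E k i \<longleftrightarrow> ecc E i \<le> k"
proof
  assume "ecc E i \<le> k"
  have "xs E (Suc k) i \<subseteq> xs E k i"
  proof
    fix u assume "u \<in> xs E (Suc k) i"
    then obtain n where "(u, i) \<in> E ^^ n" by (auto simp: xs_char)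
    then have "(u, i) \<in> E\<^sup>*" by (auto simp: rtrancl_power)
    then have "dist E u i \<le> k" "(u, i) \<in> E ^^ (dist E u i)"
      using dist_le_ecc[OF assms] \<open>ecc E i \<le> k\<close> dist_path by fastforce+
    then show "u \<in> xs E k i" by (auto simp: xs_char)
  qed
  then show "xs E (Suc k) i = xs E k i" using xs_mono[of E k i] by auto
next
  assume st: "xs E (Suc k) i = xs E k i"
  show "ecc E i \<le> k"
  proof (rule ccontr)
    assume "\<not> ecc E i \<le> k"
    obtain u where u: "(u, i) \<in> E\<^sup>*" "dist E u i = ecc E i" using ecc_attained[OF assms] .
    define m where "m = ecc E i"
    have mk: "m > k" using \<open>\<not> ecc E i \<le> k\<close> m_def by auto
    have "(u, i) \<in> E ^^ m" using dist_path[OF u(1)] u(2) m_def by simp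
    also have "m = (m - Suc k) + Suc k" using mk by simp
    finally have "(u, i) \<in> E ^^ (m - Suc k) O E ^^ Suc k" by (simp only: relpow_add)
    then obtain w where w: "(u, w) \<in> E ^^ (m - Suc k)" "(w, i) \<in> E ^^ Suc k" by auto
    then have "w \<in> xs E (Suc k) i" unfolding xs_char by blast
    then have "w \<in> xs E k i" using st by metis
    then obtain n where n: "n \<le> k" "(w, i) \<in> E ^^ n" by (auto simp: xs_char)
    then have "(u, i) \<in> E ^^ (m - Suc k) O E ^^ n" using w by auto
    then have "(u, i) \<in> E ^^ (m - Suc k + n)" by (simp add: relpow_add)
    then have "dist E u i \<le> m - Suc k + n" by (rule dist_le)
    then show False using u(2) m_def n(1) mk by linarith
  qed
qed

lemma ws_ecc:
  assumes "finite V" "E \<subseteq> V \<times> V" "k \<ge> 1"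
  shows "ws E k i \<longleftrightarrow> ecc E i + 1 \<le> k"
proof -
  obtain m where "k = Suc m" using assms(3) by (cases k) auto
  then show ?thesis using ws_iff[OF assms(1,2)] stable_iff[OF assms(1,2)] by auto
qed

lemma tau_ecc:
  assumes "finite V" "E \<subseteq> V \<times> V"
  shows "tau E i = ecc E i + 1"
  unfolding tau_def
proof (rule Least_equality)
  show "1 \<le> ecc E i + 1 \<and> ws E (ecc E i + 1) i" using ws_ecc[OF assms, of "ecc E i + 1" i] by simp
  fix k assume "1 \<le> k \<and> ws E k i"
  then show "ecc E i + 1 \<le> k" using ws_ecc[OF assms, of k i] by simp
qed

lemma diam_ecc:
  assumes "finite V" "V \<noteq> {}" "E \<subseteq> V \<times> V"
  shows "diam V E = Max (ecc E ` V)"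
proof -
  let ?D = "{dist E u v | u v. u \<in> V \<and> v \<in> V \<and> (u, v) \<in> E\<^sup>*}"
  have "?D \<subseteq> (\<lambda>(u,v). dist E u v) ` (V \<times> V)" by auto
  then have finD: "finite ?D" using assms(1) by (meson finite_SigmaI finite_imageI finite_subset)
  have fe: "finite (ecc E ` V)" using assms(1) by simp
  have "diam V E \<le> Max (ecc E ` V)"
    unfolding diam_def
  proof (rule Max.boundedI[OF finD])
    show "?D \<noteq> {}" using assms(2) by auto
    fix d assume "d \<in> ?D"
    then obtain u v where "v \<in> V" "(u, v) \<in> E\<^sup>*" "d = dist E u v" by auto
    then show "d \<le> Max (ecc E ` V)"
      using dist_le_ecc[OF assms(1,3)] fe by (meson Max_ge image_eqI le_trans)
  qed
  moreover have "Max (ecc E ` V) \<le> diam V E"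
  proof (rule Max.boundedI[OF fe])
    show "ecc E ` V \<noteq> {}" using assms(2) by auto
    fix e assume "e \<in> ecc E ` V"
    then obtain v where v: "v \<in> V" "e = ecc E v" by auto
    obtain u where u: "(u, v) \<in> E\<^sup>*" "dist E u v = ecc E v"
      using ecc_attained[OF assms(1,3)] .
    have "u \<in> V" using u(1) v(1) relpow_in_V[OF assms(3)] by (auto simp: rtrancl_power)
    then have "ecc E v \<in> ?D" using u v by force
    then show "e \<le> diam V E" unfolding diam_def using finD v by auto
  qed
  ultimately show ?thesis by simp
qed

theorem theorem3:
  fixes V :: "'a set" and E :: "'a rel"
  assumes "finite V" and "V \<noteq> {}" and "E \<subseteq> V \<times> V"
  shows "Max (tau E ` V) = diam V E + 1
         \<and> (LEAST k. k \<ge> 1 \<and> (\<forall>i\<in>V. ws E k i)) = diam V E + 1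
         \<and> diam V E = Max (tau E ` V) - 1"
proof -
  have fe: "finite (ecc E ` V)" "ecc E ` V \<noteq> {}" using assms by auto
  obtain i0 where i0: "i0 \<in> V" "ecc E i0 = Max (ecc E ` V)"
    using Max_in[OF fe] by auto
  have D: "diam V E = Max (ecc E ` V)" by (rule diam_ecc[OF assms])
  have le: "\<And>i. i \<in> V \<Longrightarrow> ecc E i \<le> diam V E" using D fe by auto
  have T: "tau E ` V = (\<lambda>i. ecc E i + 1) ` V" using tau_ecc[OF assms(1,3)] by simp
  have M: "Max (tau E ` V) = diam V E + 1"
    unfolding T
  proof (rule Max_eqI)
    show "finite ((\<lambda>i. ecc E i + 1) ` V)" using assms(1) by simp
    show "\<And>y. y \<in> (\<lambda>i. ecc E i + 1) ` V \<Longrightarrow> y \<le> diam V E + 1" using le by auto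
    show "diam V E + 1 \<in> (\<lambda>i. ecc E i + 1) ` V" using i0 D by (metis image_eqI)
  qed
  have L: "(LEAST k. k \<ge> 1 \<and> (\<forall>i\<in>V. ws E k i)) = diam V E + 1"
  proof (rule Least_equality)
    show "1 \<le> diam V E + 1 \<and> (\<forall>i\<in>V. ws E (diam V E + 1) i)"
      using ws_ecc[OF assms(1,3)] le by (simp del: ws.simps xs.simps ys.simps)
    fix k assume "1 \<le> k \<and> (\<forall>i\<in>V. ws E k i)"
    then have "ecc E i0 + 1 \<le> k" using ws_ecc[OF assms(1,3)] i0(1) by auto
    then show "diam V E + 1 \<le> k" using i0 D by simp
  qed
  show ?thesis using M L by simp
qed

end
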